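(* For fixed integers $2\le j\le n$ and every $d\in\{1,\dots,n-j+1\}$, $$\mathbb{P}(D_{n,j}=d)=\frac{\Gamma(d)\Gamma\!\left(j-\tfrac12\right)}{\Gamma\!\left(n-\tfrac12\right)}\left(\frac{\Gamma(n-1)\;{}_3F_2\!\left(\tfrac{2-d}{2},\tfrac{1-d}{2},2-j;\tfrac12,2-n;1\right)}{\Gamma(d)\,\Gamma(j-1)}-\frac{\Gamma\!\left(n-\tfrac32\right)\;{}_3F_2\!\left(\tfrac{3-d}{2},\tfrac{2-d}{2},\tfrac52-j;\tfrac32,\tfrac52-n;1\right)}{\Gamma(d-1)\,\Gamma\!\left(j-\tfrac32\right)}\right),$$ where $1/\Gamma(0)=0$ (so the second term vanishes for $d=1$) and each ${}_3F_2$ is the terminating finite sum obtained because one of its numerator parameters is a nonpositive integer (the sum stops before any denominator Pochhammer symbol vanishes).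
   Context: A plane-oriented recursive tree (PORT) is the random sequence of trees $(T_n)_{n\ge1}$ defined as follows. $T_1$ is a single node labeled $1$ (the root). For $n\ge2$, $T_n$ is obtained from $T_{n-1}$ by adding a node labeled $n$ and an edge joining it to a node $i\in\{1,\dots,n-1\}$ of $T_{n-1}$, where, conditionally on $T_1,\dots,T_{n-1}$, node $i$ is chosen with probability $(c_{n-1,i}+1)/(2n-3)$, with $c_{n-1,i}$ the number of children of $i$ in $T_{n-1}$. $D_{n,j}$ denotes the degree of the node labeled $j$ in $T_n$. The generalized hypergeometric function is ${}_pF_q(a_1,\dots,a_p;b_1,\dots,b_q;z)=\sum_{s\ge0}\frac{\langle a_1\rangle_s\cdots\langle a_p\rangle_s}{\langle b_1\rangle_s\cdots\langle b_q\rangle_s}\frac{z^s}{s!}$, where $\langle x\rangle_s=x(x+1)\cdots(x+s-1)$, $\langle x\rangle_0=1$. *)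

theory Defs
  imports "HOL-Probability.Probability"
begin

text \<open>A plane-oriented recursive tree T_n is encoded by the list xs of length n-1
  where xs ! (k-2) is the parent of node k (k = 2..n). Nodes are labeled 1..n.\<close>

text \<open>Attachment step: node i of T_n (nodes 1..n) is chosen with probability
  (c_{n,i}+1)/(2n-1), i.e. uniformly from the multiset in which node i occurs
  c_{n,i}+1 times (once as a node, once per child).\<close>
fun port :: "nat \<Rightarrow> nat list pmf" where
  "port 0 = return_pmf []"
| "port (Suc 0) = return_pmf []"
| "port (Suc (Suc m)) =
     bind_pmf (port (Suc m)) (\<lambda>xs.
       map_pmf (\<lambda>i. xs @ [i]) (pmf_of_multiset (mset [1..<m+2] + mset xs)))"

definition deg :: "nat list \<Rightarrow> nat \<Rightarrow> nat" where
  "deg xs j = count (mset xs) j + (if 2 \<le> j \<and> j \<le> length xs + 1 then 1 else 0)"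

text \<open>Terminating generalized hypergeometric 3F2: the sum stops at the first index
  at which a nonpositive integer numerator parameter makes the Pochhammer symbol vanish.\<close>
definition hyp3F2 :: "real \<Rightarrow> real \<Rightarrow> real \<Rightarrow> real \<Rightarrow> real \<Rightarrow> real \<Rightarrow> real" where
  "hyp3F2 a1 a2 a3 b1 b2 z =
     (let N = Min {nat \<lfloor>-a\<rfloor> | a. a \<in> {a1, a2, a3} \<and> a \<in> \<int> \<and> a \<le> 0} in
      \<Sum>s\<le>N. pochhammer a1 s * pochhammer a2 s * pochhammer a3 s
              / (pochhammer b1 s * pochhammer b2 s) * z ^ s / fact s)"

end

theory Submission
  imports Defs
begin


lemma port_support:
  "xs \<in> set_pmf (port (Suc m)) \<Longrightarrow> length xs = m \<and> set xs \<subseteq> {1..m}"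
proof (induction m arbitrary: xs)
  case 0 then show ?case by simp
next
  case (Suc m)
  have ne: "mset [1..<m+2] + mset ys \<noteq> {#}" for ys :: "nat list" by simp
  from Suc.prems obtain ys i where ys: "ys \<in> set_pmf (port (Suc m))"
    and i: "i \<in> set_mset (mset [1..<m+2] + mset ys)" and xs: "xs = ys @ [i]"
    using ne by (auto simp del: upt_Suc)
  from Suc.IH[OF ys] have "length ys = m" "set ys \<subseteq> {1..m}" by auto
  moreover from i this have "i \<in> {1..Suc m}" by auto
  ultimately show ?case using xs by auto
qed

definition Dn :: "nat \<Rightarrow> nat \<Rightarrow> nat pmf" where
  "Dn j n = map_pmf (\<lambda>xs. deg xs j) (port n)"

lemma prob_eq_pmf: "measure_pmf.prob (port n) {xs. deg xs j = d} = pmf (Dn j n) d"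
  unfolding Dn_def pmf_map by (simp add: vimage_def)

lemma deg_support:
  assumes "xs \<in> set_pmf (port (Suc m))" "2 \<le> j" "j \<le> Suc m"
  shows "deg xs j = count (mset xs) j + 1"
  using port_support[OF assms(1)] assms by (simp add: deg_def)

lemma Dn_base:
  assumes "2 \<le> j"
  shows "Dn j j = return_pmf 1"
proof -
  obtain m where m: "j = Suc m" using assms by (cases j) auto
  have "deg xs j = 1" if "xs \<in> set_pmf (port j)" for xs
  proof -
    have "set xs \<subseteq> {1..m}" using port_support that m by auto
    then have "count (mset xs) j = 0" using m by auto
    then show ?thesis using deg_support[of xs m j] that m assms by simp
  qed
  then have "Dn j j = map_pmf (\<lambda>_. 1) (port j)" unfolding Dn_def
    by (intro map_pmf_cong) auto
  then show ?thesis by simp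
qed

lemma Dn_zero:
  assumes "2 \<le> j" "j \<le> Suc m"
  shows "pmf (Dn j (Suc m)) 0 = 0"
  unfolding Dn_def pmf_map measure_pmf_zero_iff
  using deg_support[OF _ assms] by auto

lemma Dn_step:
  assumes "2 \<le> j" "j \<le> Suc m" "1 \<le> d"
  shows "pmf (Dn j (Suc (Suc m))) d =
     (1 - real d / (2 * real m + 1)) * pmf (Dn j (Suc m)) d
     + (real d - 1) / (2 * real m + 1) * pmf (Dn j (Suc m)) (d - 1)"
proof -
  define M where "M = (\<lambda>xs::nat list. mset [1..<m+2] + mset xs)"
  have ne: "M xs \<noteq> {#}" for xs by (simp add: M_def)
  have "d - Suc 0 \<noteq> d" using assms(3) by simp
  define H where "H = (\<lambda>e::nat. (if e = d then 1 - real d / (2 * real m + 1) else 0)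
      + (if e + 1 = d then (real d - 1) / (2 * real m + 1) else 0))"
  have "Dn j (Suc (Suc m)) = bind_pmf (port (Suc m))
     (\<lambda>xs. map_pmf (\<lambda>i. deg (xs @ [i]) j) (pmf_of_multiset (M xs)))"
    unfolding Dn_def by (simp add: map_bind_pmf pmf.map_comp o_def M_def del: upt_Suc)
  then have "pmf (Dn j (Suc (Suc m))) d =
     (\<integral>xs. pmf (map_pmf (\<lambda>i. deg (xs @ [i]) j) (pmf_of_multiset (M xs))) d \<partial>port (Suc m))"
    by (simp add: pmf_bind)
  also have "\<dots> = (\<integral>xs. H (deg xs j) \<partial>port (Suc m))"
  proof (intro integral_cong_AE)
    show "AE xs in port (Suc m). pmf (map_pmf (\<lambda>i. deg (xs @ [i]) j) (pmf_of_multiset (M xs))) d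
        = H (deg xs j)"
    proof (unfold AE_measure_pmf_iff, intro ballI)
      fix xs assume xs: "xs \<in> set_pmf (port (Suc m))"
      have len: "length xs = m" using port_support[OF xs] by auto
      define e where "e = deg xs j"
      have e: "e = count (mset xs) j + 1" using deg_support[OF xs assms(1,2)] e_def by simp
      have g: "deg (xs @ [i]) j = e + (if i = j then 1 else 0)" for i
        using e len assms by (simp add: deg_def)
      have cnt: "count (M xs) j = e" using e assms unfolding M_def by simp
      have sz: "size (M xs) = 2 * m + 1" using len unfolding M_def by simp
      have pj: "pmf (pmf_of_multiset (M xs)) j = real e / (2 * real m + 1)"
        using ne[of xs] cnt sz by simp
      have "pmf (map_pmf (\<lambda>i. deg (xs @ [i]) j) (pmf_of_multiset (M xs))) d
          = measure_pmf.prob (pmf_of_multiset (M xs)) {i. e + (if i = j then 1 else 0) = d}"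
        unfolding pmf_map by (simp add: g vimage_def)
      also have "\<dots> = H e"
      proof (cases "e = d")
        case True
        then have "{i. e + (if i = j then 1 else 0) = d} = UNIV - {j}" by auto
        moreover have "measure_pmf.prob (pmf_of_multiset (M xs)) (UNIV - {j}) = 1 - pmf (pmf_of_multiset (M xs)) j"
          using measure_pmf.prob_compl[of "{j}" "pmf_of_multiset (M xs)"] by (simp add: measure_pmf_single)
        ultimately show ?thesis using True pj by (simp add: H_def)
      next
        case False
        show ?thesis
        proof (cases "e + 1 = d")
          case True
          then have "{i. e + (if i = j then 1 else 0) = d} = {j}" by auto
          then show ?thesis using True False pj
            by (simp add: measure_pmf_single H_def)
        next
          case F2: False
          then have "{i. e + (if i = j then 1 else 0) = d} = {}" using False by auto
          then show ?thesis using F2 False by (simp add: H_def)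
        qed
      qed
      finally show "pmf (map_pmf (\<lambda>i. deg (xs @ [i]) j) (pmf_of_multiset (M xs))) d
        = H (deg xs j)" by (simp add: e_def)
    qed
  qed simp_all
  also have "\<dots> = (\<integral>e. H e \<partial>Dn j (Suc m))" unfolding Dn_def by simp
  also have "\<dots> = (\<Sum>a\<in>{d, d - 1}. H a * pmf (Dn j (Suc m)) a)"
    by (intro integral_measure_pmf_real) (auto simp: H_def split: if_splits)
  also have "\<dots> = H d * pmf (Dn j (Suc m)) d + H (d - 1) * pmf (Dn j (Suc m)) (d - 1)"
    using assms(3) by (subst sum.insert) auto
  also have "\<dots> = (1 - real d / (2 * real m + 1)) * pmf (Dn j (Suc m)) d
     + (real d - 1) / (2 * real m + 1) * pmf (Dn j (Suc m)) (d - 1)"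
    using assms(3) by (simp add: H_def of_nat_diff \<open>d - Suc 0 \<noteq> d\<close>)
  finally show ?thesis .
qed



definition ff :: "nat \<Rightarrow> nat \<Rightarrow> nat \<Rightarrow> real" where
  "ff j k n = pochhammer (real j - (real k + 2)/2) (n - j) / pochhammer (real j - 1/2) (n - j)"

definition GG :: "nat \<Rightarrow> nat \<Rightarrow> nat \<Rightarrow> real" where
  "GG j n d = (\<Sum>k<d. (-1)^k * real (d - 1 choose k) * ff j k n)"

lemma ff_step:
  assumes "2 \<le> j" "j \<le> Suc m"
  shows "ff j k (Suc (Suc m)) = ff j k (Suc m) * (1 - (real k + 1)/(2 * real m + 1))"
proof -
  have e: "Suc (Suc m) - j = Suc (Suc m - j)" using assms by simp
  have pos: "pochhammer (real j - 1/2) (Suc m - j) > 0"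
    using assms by (intro pochhammer_pos) simp
  have c: "real (Suc m - j) = real m + 1 - real j" using assms by (simp add: of_nat_diff)
  define A where "A = pochhammer (real j - (real k + 2)/2) (Suc m - j)"
  define B where "B = pochhammer (real j - 1/2) (Suc m - j)"
  have "ff j k (Suc (Suc m)) = (A * (real m + 1 - (real k+2)/2)) / (B * (real m + 1/2))"
    unfolding ff_def e pochhammer_Suc c A_def B_def by (simp add: algebra_simps)
  also have "\<dots> = (A / B) * ((real m + 1 - (real k+2)/2) / (real m + 1/2))" by simp
  also have "(real m + 1 - (real k+2)/2) / (real m + 1/2) = 1 - (real k + 1)/(2 * real m + 1)"
    by (simp add: field_simps)
  finally show ?thesis unfolding ff_def A_def B_def .
qed

lemma GG_step:
  assumes "2 \<le> j" "j \<le> Suc m" "1 \<le> d"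
  shows "GG j (Suc (Suc m)) d =
     (1 - real d / (2 * real m + 1)) * GG j (Suc m) d
     + (real d - 1) / (2 * real m + 1) * GG j (Suc m) (d - 1)"
proof -
  obtain e where d: "d = Suc e" using assms by (cases d) auto
  define c where "c = 2 * real m + 1"
  have cpos: "c > 0" by (simp add: c_def)
  define a where "a = (\<lambda>k. (-1)^k * real (e choose k) * ff j k (Suc m))"
  have "GG j (Suc (Suc m)) d = (\<Sum>k<Suc e. a k * (1 - (real k + 1)/c))"
    unfolding GG_def d a_def c_def using ff_step[OF assms(1,2)] by (simp add: mult.assoc)
  also have "\<dots> = (\<Sum>k<Suc e. a k * (1 - real d / c)) + (\<Sum>k<Suc e. a k * (real e - real k)) / c"
    unfolding sum_divide_distrib sum.distrib[symmetric] using cpos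
    by (intro sum.cong) (auto simp: field_simps d)
  also have "(\<Sum>k<Suc e. a k * (real e - real k)) = (\<Sum>k<e. a k * (real e - real k))"
    by simp
  also have "\<dots> = real e * GG j (Suc m) e"
    unfolding GG_def sum_distrib_left
  proof (intro sum.cong refl)
    fix k assume "k \<in> {..<e}"
    then have k: "k < e" by simp
    have h: "real (e - k) * real (e choose k) = real e * real (e - 1 choose k)"
      using binomial_absorb_comp[of e k] by (metis of_nat_mult)
    have "a k * (real e - real k) = (-1)^k * ff j k (Suc m) * (real (e - k) * real (e choose k))"
      using k unfolding a_def by (simp add: of_nat_diff algebra_simps)
    also have "\<dots> = (-1)^k * ff j k (Suc m) * (real e * real (e - 1 choose k))" using h by simp
    finally show "a k * (real e - real k) = real e * ((- 1) ^ k * real (e - 1 choose k) * ff j k (Suc m))"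
      by (simp add: algebra_simps)
  qed
  also have "(\<Sum>k<Suc e. a k * (1 - real d / c)) = (1 - real d / c) * GG j (Suc m) d"
    unfolding GG_def d a_def sum_distrib_left by (intro sum.cong) (auto simp: mult.commute)
  finally show ?thesis
    unfolding c_def d by simp
qed

lemma pmf_Dn_GG:
  assumes "2 \<le> j" "j \<le> n"
  shows "pmf (Dn j n) d = GG j n d"
  using assms(2)
proof (induction n arbitrary: d rule: dec_induct)
  case base
  show ?case
  proof (cases d)
    case 0 then show ?thesis by (simp add: Dn_base[OF assms(1)] GG_def)
  next
    case (Suc e)
    have "GG j j d = (\<Sum>k\<le>e. (-1)^k * real (e choose k))"
      unfolding GG_def Suc ff_def lessThan_Suc_atMost by simp
    also have "\<dots> = (if e = 0 then 1 else 0)"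
      using choose_alternating_sum[of e] by auto
    finally show ?thesis by (simp add: Dn_base[OF assms(1)] Suc)
  qed
next
  case (step n)
  obtain m where m: "n = Suc m" using step.hyps assms by (cases n) auto
  show ?case
  proof (cases d)
    case 0 then show ?thesis using Dn_zero[of j "Suc m"] step.hyps assms m by (simp add: GG_def)
  next
    case (Suc e)
    then show ?thesis using Dn_step[of j m d] GG_step[of j m d] step.IH step.hyps assms m by simp
  qed
qed



definition tm :: "real \<Rightarrow> real \<Rightarrow> real \<Rightarrow> real \<Rightarrow> real \<Rightarrow> real \<Rightarrow> nat \<Rightarrow> real" where
  "tm a1 a2 a3 b1 b2 z s = pochhammer a1 s * pochhammer a2 s * pochhammer a3 s
              / (pochhammer b1 s * pochhammer b2 s) * z ^ s / fact s"

lemma hyp_extend: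
  assumes "a \<in> {a1, a2, a3}" "a = - of_nat m0" "m0 \<le> M"
  shows "hyp3F2 a1 a2 a3 b1 b2 z = (\<Sum>s\<le>M. tm a1 a2 a3 b1 b2 z s)"
proof -
  define S where "S = {nat \<lfloor>-a\<rfloor> | a. a \<in> {a1, a2, a3} \<and> a \<in> \<int> \<and> a \<le> 0}"
  have fin: "finite S"
    by (rule finite_subset[of _ "(\<lambda>a. nat \<lfloor>-a\<rfloor>) ` {a1, a2, a3}"]) (auto simp: S_def)
  have m0S: "m0 \<in> S" unfolding S_def using assms(1,2)
    by (intro CollectI exI[of _ a]) auto
  define N where "N = Min S"
  have NS: "N \<in> S" unfolding N_def using fin m0S by (intro Min_in) auto
  have Nle: "N \<le> m0" unfolding N_def using fin m0S by simp
  from NS obtain a' where a': "a' \<in> {a1, a2, a3}" "a' \<in> \<int>" "a' \<le> 0" "N = nat \<lfloor>-a'\<rfloor>"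
    unfolding S_def by blast
  have a'N: "a' = - of_nat N"
  proof -
    from a'(2) obtain i where i: "a' = of_int i" by (auto elim: Ints_cases)
    then show ?thesis using a'(3,4) by simp
  qed
  have zero: "tm a1 a2 a3 b1 b2 z s = 0" if "s > N" for s
  proof -
    have "pochhammer a' s = 0" unfolding pochhammer_eq_0_iff using that a'N by blast
    then show ?thesis using a'(1) unfolding tm_def by auto
  qed
  have "hyp3F2 a1 a2 a3 b1 b2 z = (\<Sum>s\<le>N. tm a1 a2 a3 b1 b2 z s)"
    unfolding hyp3F2_def tm_def N_def S_def Let_def by simp
  also have "\<dots> = (\<Sum>s\<le>M. tm a1 a2 a3 b1 b2 z s)"
    using Nle assms(3) zero by (intro sum.mono_neutral_left) auto
  finally show ?thesis .
qed

lemma GrG: assumes "(x::real) > 0" shows "Gamma x * rGamma x = 1"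
proof -
  have "Gamma x \<noteq> 0" using Gamma_real_pos[OF assms] by simp
  then show ?thesis by (simp add: rGamma_inverse_Gamma)
qed

lemma Gamma_ratio: "(z::real) > 0 \<Longrightarrow> Gamma (z + of_nat m) * rGamma z = pochhammer z m"
proof -
  assume z: "z > 0"
  have "rGamma z = pochhammer z m * rGamma (z + of_nat m)" by (rule pochhammer_rGamma)
  then have "Gamma (z + of_nat m) * rGamma z = pochhammer z m * (Gamma (z + of_nat m) * rGamma (z + of_nat m))"
    by simp
  also have "\<dots> = pochhammer z m" using GrG[of "z + of_nat m"] z by simp
  finally show ?thesis .
qed

lemma binom_poch: "real (e choose k) = (-1)^k * pochhammer (- real e) k / fact k"
proof -
  have "real (e choose k) = real e gchoose k" by (rule binomial_gbinomial)
  then show ?thesis by (simp only: gbinomial_pochhammer)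
qed

lemma fact_odd: "fact (2 * s + 1) = (2 ^ (2 * s) * pochhammer (3 / 2) s * fact s :: real)"
proof -
  have "pochhammer (2 * (1::real)) (2 * s) = of_nat (2^(2 * s)) * pochhammer 1 s * pochhammer (1 + 1/2) s"
    by (rule pochhammer_double)
  moreover have "fact (2 * s + 1) = (pochhammer 2 (2 * s) :: real)"
    using pochhammer_rec[of "1::real" "2 * s"] by (simp add: pochhammer_fact)
  ultimately show ?thesis by (simp add: pochhammer_fact)
qed

lemma F1_term:
  assumes "2 \<le> j" "j \<le> n" "d = Suc e" "d \<le> n - j + 1"
  shows "tm ((2 - real d)/2) ((1 - real d)/2) (2 - real j) (1/2) (2 - real n) 1 s
           * pochhammer (real j - 1) (n - j)
         = real (e choose (2 * s)) * pochhammer (real j - 1 - real s) (n - j)"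
proof -
  have A: "pochhammer ((2 - real d)/2) s * pochhammer ((1 - real d)/2) s / (pochhammer (1/2) s * fact s)
      = real (e choose (2 * s))"
  proof -
    have "pochhammer (2 * ((1 - real d)/2)) (2 * s) = of_nat (2^(2 * s)) * pochhammer ((1 - real d)/2) s
          * pochhammer ((1 - real d)/2 + 1/2) s" by (rule pochhammer_double)
    moreover have "2 * ((1 - real d)/2) = - real e" "(1 - real d)/2 + 1/2 = (2 - real d)/2"
      using assms(3) by auto
    ultimately have p: "pochhammer (- real e) (2 * s) = 2^(2 * s) * pochhammer ((1 - real d)/2) s
          * pochhammer ((2 - real d)/2) s" by simp
    have f: "fact (2 * s) = (2^(2 * s) * pochhammer (1/2) s * fact s :: real)" by (rule fact_double)
    have pos: "pochhammer (1/2::real) s > 0" by (intro pochhammer_pos) simp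
    have "real (e choose (2 * s)) = pochhammer (- real e) (2 * s) / fact (2 * s)"
      by (simp add: binom_poch)
    also have "\<dots> = pochhammer ((2 - real d)/2) s * pochhammer ((1 - real d)/2) s / (pochhammer (1/2) s * fact s)"
      unfolding p f using pos by (simp add: field_simps)
    finally show ?thesis by simp
  qed
  show ?thesis
  proof (cases "pochhammer (2 - real n) s = 0")
    case True
    then obtain k where k: "k < s" "2 - real n = - real k" unfolding pochhammer_eq_0_iff by blast
    then have "real k = real n - 2" by simp
    then have "2 * s > e" using k(1) assms by linarith
    then have "e choose (2 * s) = 0" by simp
    then show ?thesis using True unfolding tm_def by simp
  next
    case False
    have m1: "pochhammer (2 - real j) s = (-1)^s * pochhammer (real j - 1 - real s) s"
      using pochhammer_minus[of "real j - 2" s] by (simp add: algebra_simps)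
    have m2: "pochhammer (2 - real n) s = (-1)^s * pochhammer (real n - 1 - real s) s"
      using pochhammer_minus[of "real n - 2" s] by (simp add: algebra_simps)
    have nj: "real (n - j) = real n - real j" using assms by (simp add: of_nat_diff)
    have pr: "pochhammer (real j - 1 - real s) s * pochhammer (real j - 1) (n - j)
        = pochhammer (real j - 1 - real s) (n - j) * pochhammer (real n - 1 - real s) s"
    proof -
      have "pochhammer (real j - 1 - real s) (s + (n - j)) = pochhammer (real j - 1 - real s) s * pochhammer (real j - 1) (n - j)"
        using pochhammer_product'[of "real j - 1 - real s" s "n - j"] by simp
      moreover have "pochhammer (real j - 1 - real s) ((n - j) + s) = pochhammer (real j - 1 - real s) (n - j) * pochhammer (real n - 1 - real s) s"
        using pochhammer_product'[of "real j - 1 - real s" "n - j" s] nj by (simp add: algebra_simps)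
      ultimately show ?thesis by (simp add: add.commute)
    qed
    have nz: "pochhammer (real n - 1 - real s) s \<noteq> 0" using False m2 by simp
    have "tm ((2 - real d)/2) ((1 - real d)/2) (2 - real j) (1/2) (2 - real n) 1 s
           * pochhammer (real j - 1) (n - j)
        = (pochhammer ((2 - real d)/2) s * pochhammer ((1 - real d)/2) s / (pochhammer (1/2) s * fact s))
          * (pochhammer (real j - 1 - real s) s * pochhammer (real j - 1) (n - j) / pochhammer (real n - 1 - real s) s)"
      unfolding tm_def m1 m2 by (simp add: field_simps)
    also have "\<dots> = real (e choose (2 * s)) * pochhammer (real j - 1 - real s) (n - j)"
      unfolding A pr using nz by simp
    finally show ?thesis .
  qed
qed

lemma F2_term:
  assumes "2 \<le> j" "j \<le> n" "d = Suc e"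
  shows "(real d - 1) * tm ((3 - real d)/2) ((2 - real d)/2) (5/2 - real j) (3/2) (5/2 - real n) 1 s
           * pochhammer (real j - 3/2) (n - j)
         = real (e choose (2 * s + 1)) * pochhammer (real j - 3/2 - real s) (n - j)"
proof -
  have A: "(real d - 1) * pochhammer ((3 - real d)/2) s * pochhammer ((2 - real d)/2) s / (pochhammer (3/2) s * fact s)
      = real (e choose (2 * s + 1))"
  proof -
    have "pochhammer (2 * ((2 - real d)/2)) (2 * s) = of_nat (2^(2 * s)) * pochhammer ((2 - real d)/2) s
          * pochhammer ((2 - real d)/2 + 1/2) s" by (rule pochhammer_double)
    moreover have eq1: "2 * ((2 - real d)/2) = - real e + 1" and eq2: "(2 - real d)/2 + 1/2 = (3 - real d)/2"
      using assms(3) by auto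
    ultimately have p: "pochhammer (- real e + 1) (2 * s) = 2^(2 * s) * pochhammer ((2 - real d)/2) s
          * pochhammer ((3 - real d)/2) s" unfolding eq1 eq2 by simp
    have r: "pochhammer (- real e) (2 * s + 1) = - real e * pochhammer (- real e + 1) (2 * s)"
      using pochhammer_rec[of "- real e" "2 * s"] by simp
    have pos: "pochhammer (3/2::real) s > 0" by (intro pochhammer_pos) simp
    have "real (e choose (2 * s + 1)) = - pochhammer (- real e) (2 * s + 1) / fact (2 * s + 1)"
      by (simp add: binom_poch)
    also have "\<dots> = (real d - 1) * pochhammer ((3 - real d)/2) s * pochhammer ((2 - real d)/2) s / (pochhammer (3/2) s * fact s)"
      unfolding r p fact_odd using pos assms(3) by (simp add: field_simps)
    finally show ?thesis by simp
  qed
  have m1: "pochhammer (5/2 - real j) s = (-1)^s * pochhammer (real j - 3/2 - real s) s"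
    using pochhammer_minus[of "real j - 5/2" s] by (simp add: algebra_simps)
  have m2: "pochhammer (5/2 - real n) s = (-1)^s * pochhammer (real n - 3/2 - real s) s"
    using pochhammer_minus[of "real n - 5/2" s] by (simp add: algebra_simps)
  have nz0: "pochhammer (5/2 - real n) s \<noteq> 0"
  proof
    assume "pochhammer (5/2 - real n) s = 0"
    then obtain k where k: "5/2 - real n = - real k" unfolding pochhammer_eq_0_iff by blast
    then have "real (2*k + 5) = real (2*n)" by simp
    then have "2*k + 5 = 2*n" by (simp only: of_nat_eq_iff)
    then show False by presburger
  qed
  have nj: "real (n - j) = real n - real j" using assms by (simp add: of_nat_diff)
  have pr: "pochhammer (real j - 3/2 - real s) s * pochhammer (real j - 3/2) (n - j)
      = pochhammer (real j - 3/2 - real s) (n - j) * pochhammer (real n - 3/2 - real s) s"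
  proof -
    have "pochhammer (real j - 3/2 - real s) (s + (n - j)) = pochhammer (real j - 3/2 - real s) s * pochhammer (real j - 3/2) (n - j)"
      using pochhammer_product'[of "real j - 3/2 - real s" s "n - j"] by simp
    moreover have "pochhammer (real j - 3/2 - real s) ((n - j) + s) = pochhammer (real j - 3/2 - real s) (n - j) * pochhammer (real n - 3/2 - real s) s"
      using pochhammer_product'[of "real j - 3/2 - real s" "n - j" s] nj by (simp add: algebra_simps)
    ultimately show ?thesis by (simp add: add.commute)
  qed
  have nz: "pochhammer (real n - 3/2 - real s) s \<noteq> 0" using nz0 m2 by simp
  have "(real d - 1) * tm ((3 - real d)/2) ((2 - real d)/2) (5/2 - real j) (3/2) (5/2 - real n) 1 s
           * pochhammer (real j - 3/2) (n - j)
      = ((real d - 1) * pochhammer ((3 - real d)/2) s * pochhammer ((2 - real d)/2) s / (pochhammer (3/2) s * fact s))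
        * (pochhammer (real j - 3/2 - real s) s * pochhammer (real j - 3/2) (n - j) / pochhammer (real n - 3/2 - real s) s)"
    unfolding tm_def m1 m2 by (simp add: field_simps)
  also have "\<dots> = real (e choose (2 * s + 1)) * pochhammer (real j - 3/2 - real s) (n - j)"
    unfolding A pr using nz by simp
  finally show ?thesis .
qed



lemma sum_even_odd: "(\<Sum>k<2 * N. g k) = (\<Sum>s<N. g (2 * s) + g (2 * s + 1))"
  for g :: "nat \<Rightarrow> real"
  by (induction N) (simp_all add: algebra_simps)

theorem corollary3p1:
  fixes n j d :: nat
  assumes "2 \<le> j" and "j \<le> n" and "1 \<le> d" and "d \<le> n - j + 1"
  shows "measure_pmf.prob (port n) {xs. deg xs j = d} =
    Gamma (real d) * Gamma (real j - 1/2) / Gamma (real n - 1/2) *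
      (Gamma (real n - 1) *
         hyp3F2 ((2 - real d)/2) ((1 - real d)/2) (2 - real j) (1/2) (2 - real n) 1
         * rGamma (real d) * rGamma (real j - 1)
       - Gamma (real n - 3/2) *
         hyp3F2 ((3 - real d)/2) ((2 - real d)/2) (5/2 - real j) (3/2) (5/2 - real n) 1
         * rGamma (real d - 1) * rGamma (real j - 3/2))"
proof -
  obtain e where de: "d = Suc e" using assms(3) by (cases d) auto
  define Q where "Q = pochhammer (real j - 1/2) (n - j)"
  define P1 where "P1 = pochhammer (real j - 1) (n - j)"
  define P2 where "P2 = pochhammer (real j - 3/2) (n - j)"
  define M where "M = d + j"
  define F1 where "F1 = hyp3F2 ((2 - real d)/2) ((1 - real d)/2) (2 - real j) (1/2) (2 - real n) 1"
  define F2 where "F2 = hyp3F2 ((3 - real d)/2) ((2 - real d)/2) (5/2 - real j) (3/2) (5/2 - real n) 1"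
  have Qpos: "Q > 0" unfolding Q_def using assms by (intro pochhammer_pos) simp
  have nj: "real (n - j) = real n - real j" using assms by (simp add: of_nat_diff)
  have g1: "Gamma (real n - 1) * rGamma (real j - 1) = P1"
  proof -
    have "real j - 1 + real (n - j) = real n - 1" using nj by simp
    then show ?thesis using Gamma_ratio[of "real j - 1" "n - j"] assms unfolding P1_def by simp
  qed
  have g2: "Gamma (real n - 3/2) * rGamma (real j - 3/2) = P2"
  proof -
    have "real j - 3/2 + real (n - j) = real n - 3/2" using nj by simp
    then show ?thesis using Gamma_ratio[of "real j - 3/2" "n - j"] assms unfolding P2_def by simp
  qed
  have g0: "Gamma (real j - 1/2) / Gamma (real n - 1/2) = 1 / Q"
  proof -
    have "real j - 1/2 + real (n - j) = real n - 1/2" using nj by simp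
    then have q: "Gamma (real n - 1/2) * rGamma (real j - 1/2) = Q"
      using Gamma_ratio[of "real j - 1/2" "n - j"] assms unfolding Q_def by simp
    have q': "Q = Gamma (real n - 1/2) / Gamma (real j - 1/2)"
      using q by (metis rGamma_inverse_Gamma divide_inverse)
    then show ?thesis by (simp only: q') simp
  qed
  have g3: "Gamma (real d) * rGamma (real d) = 1" using GrG[of "real d"] assms by simp
  have g4: "Gamma (real d) * rGamma (real d - 1) = real d - 1"
  proof -
    have "rGamma (real d - 1) = pochhammer (real d - 1) 1 * rGamma (real d - 1 + of_nat 1)"
      by (rule pochhammer_rGamma)
    then have "rGamma (real d - 1) = (real d - 1) * rGamma (real d)" by simp
    then show ?thesis using g3 by simp
  qed
  have RHS: "Gamma (real d) * Gamma (real j - 1/2) / Gamma (real n - 1/2) *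
      (Gamma (real n - 1) * F1 * rGamma (real d) * rGamma (real j - 1)
       - Gamma (real n - 3/2) * F2 * rGamma (real d - 1) * rGamma (real j - 3/2))
     = (Gamma (real j - 1/2) / Gamma (real n - 1/2)) *
       ((Gamma (real d) * rGamma (real d)) * (Gamma (real n - 1) * rGamma (real j - 1)) * F1
        - (Gamma (real d) * rGamma (real d - 1)) * (Gamma (real n - 3/2) * rGamma (real j - 3/2)) * F2)"
    by (simp add: algebra_simps)
  also have "\<dots> = (P1 * F1 - (real d - 1) * F2 * P2) / Q"
    unfolding g0 g1 g2 g3 g4 using Qpos by (simp add: field_simps)
  finally have RHS: "Gamma (real d) * Gamma (real j - 1/2) / Gamma (real n - 1/2) *
      (Gamma (real n - 1) * F1 * rGamma (real d) * rGamma (real j - 1)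
       - Gamma (real n - 3/2) * F2 * rGamma (real d - 1) * rGamma (real j - 3/2))
     = (P1 * F1 - (real d - 1) * F2 * P2) / Q" .
  have X1: "P1 * F1 = (\<Sum>s\<le>M. real (e choose (2 * s)) * pochhammer (real j - 1 - real s) (n - j))"
  proof -
    have F1e: "F1 = (\<Sum>s\<le>M. tm ((2 - real d)/2) ((1 - real d)/2) (2 - real j) (1/2) (2 - real n) 1 s)"
      unfolding F1_def
      by (rule hyp_extend[of "2 - real j" _ _ _ "j - 2"]) (use assms in \<open>auto simp: M_def of_nat_diff\<close>)
    have "P1 * F1 = (\<Sum>s\<le>M. tm ((2 - real d)/2) ((1 - real d)/2) (2 - real j) (1/2) (2 - real n) 1 s * P1)"
      unfolding F1e sum_distrib_left by (simp add: mult.commute)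
    also have "\<dots> = (\<Sum>s\<le>M. real (e choose (2 * s)) * pochhammer (real j - 1 - real s) (n - j))"
      unfolding P1_def by (intro sum.cong refl F1_term[OF assms(1,2) de assms(4)])
    finally show ?thesis .
  qed
  have X2: "(real d - 1) * F2 * P2 = (\<Sum>s\<le>M. real (e choose (2 * s + 1)) * pochhammer (real j - 3/2 - real s) (n - j))"
  proof (cases "e = 0")
    case True
    then show ?thesis using de by simp
  next
    case False
    obtain a m0 where a: "a \<in> {(3 - real d)/2, (2 - real d)/2, 5/2 - real j}" "a = - of_nat m0" "m0 \<le> M"
    proof (cases "even d")
      case True
      then obtain h where h: "d = 2 * h" by (auto elim: evenE)
      show ?thesis
        by (rule that[of "(2 - real d)/2" "h - 1"]) (use h False de in \<open>auto simp: M_def of_nat_diff\<close>)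
    next
      case F: False
      then obtain h where h: "d = 2 * h + 1" by (auto elim: oddE)
      show ?thesis
        by (rule that[of "(3 - real d)/2" "h - 1"]) (use h False de in \<open>auto simp: M_def of_nat_diff\<close>)
    qed
    have F2e: "F2 = (\<Sum>s\<le>M. tm ((3 - real d)/2) ((2 - real d)/2) (5/2 - real j) (3/2) (5/2 - real n) 1 s)"
      unfolding F2_def by (rule hyp_extend[OF a])
    have "(real d - 1) * F2 * P2 = (\<Sum>s\<le>M. (real d - 1) * tm ((3 - real d)/2) ((2 - real d)/2) (5/2 - real j) (3/2) (5/2 - real n) 1 s * P2)"
      unfolding F2e sum_distrib_left sum_distrib_right by simp
    also have "\<dots> = (\<Sum>s\<le>M. real (e choose (2 * s + 1)) * pochhammer (real j - 3/2 - real s) (n - j))"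
      unfolding P2_def by (intro sum.cong refl F2_term[OF assms(1,2) de])
    finally show ?thesis .
  qed
  define hq where "hq = (\<lambda>k. (-1)^k * real (e choose k) * pochhammer (real j - (real k + 2)/2) (n - j))"
  have "measure_pmf.prob (port n) {xs. deg xs j = d} = GG j n d"
    using prob_eq_pmf pmf_Dn_GG[OF assms(1,2)] by simp
  also have "\<dots> = (\<Sum>k<d. hq k) / Q"
    unfolding GG_def ff_def hq_def Q_def sum_divide_distrib de by simp
  also have "(\<Sum>k<d. hq k) = (\<Sum>k<2 * (M + 1). hq k)"
    by (intro sum.mono_neutral_left) (auto simp: M_def hq_def de)
  also have "\<dots> = (\<Sum>s<M + 1. hq (2 * s) + hq (2 * s + 1))" by (rule sum_even_odd)
  also have "\<dots> = (\<Sum>s\<le>M. real (e choose (2 * s)) * pochhammer (real j - 1 - real s) (n - j))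
      - (\<Sum>s\<le>M. real (e choose (2 * s + 1)) * pochhammer (real j - 3/2 - real s) (n - j))"
  proof -
    have "hq (2 * s) + hq (2 * s + 1) = real (e choose (2 * s)) * pochhammer (real j - 1 - real s) (n - j)
        - real (e choose (2 * s + 1)) * pochhammer (real j - 3/2 - real s) (n - j)" for s
    proof -
      have a1: "real j - (real (2 * s) + 2)/2 = real j - 1 - real s" by (simp add: field_simps)
      have a2: "real j - (real (2 * s + 1) + 2)/2 = real j - 3/2 - real s" by (simp add: field_simps)
      show ?thesis unfolding hq_def a1 a2 by simp
    qed
    then show ?thesis by (simp add: lessThan_Suc_atMost sum_subtractf)
  qed
  finally show ?thesis
    unfolding F1_def[symmetric] F2_def[symmetric] RHS X1[symmetric] X2[symmetric] .
qed


end
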